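(* The algebras $\mathcal{A}$ and $T$ coincide. In particular, $\{M^{t,p}_{i,j}\mid (i,j,t,p)\in\mathcal{I}_m\}$ is a basis of $T$, and $T$ equals the centralizer algebra of the stabilizer $\mathrm{Aut}_{x_0}(O_{m+1})$, i.e. the algebra of complex $X\times X$ matrices invariant under simultaneously permuting rows and columns by elements of $\mathrm{Aut}_{x_0}(O_{m+1})$.
   Context: Let $m$ be a positive integer, $S=\{1,\ldots,2m+1\}$, $X$ the set of $m$-subsets of $S$, and $O_{m+1}$ the Odd graph on $X$ (adjacency = disjointness), with distance function $\partial$ and diameter $m$. Let $x_0=\{1,\ldots,m\}$ and $\mathrm{Aut}_{x_0}(O_{m+1})$ the stabilizer of $x_0$ in the automorphism group. $A_1$ is the adjacency matrix; $E^*_i$ ($0\leq i\leq m$) is the diagonal $X\times X$ matrix with $(y,y)$-entry $1$ if $\partial(x_0,y)=i$, else $0$. The Terwilliger algebra $T$ is the subalgebra of complex $X\times X$ matrices generated by $A_1,E^*_0,\ldots,E^*_m$. For $(x,y,z)\in X^3$ let $\partial(x,y,z):=(|x\cap y|,|x\cap z|,|y\cap z|,|x\cap y\cap z|)$, and $\mathcal{I}_m$ the set of four-tuples realized as some $\partial(x,y,z)$. For $(i,j,t,p)\in\mathcal{I}_m$, $M^{t,p}_{i,j}$ is the $0/1$ matrix with $(x,y)$-entry $1$ iff $\partial(x_0,x,y)=(i,j,t,p)$. $\mathcal{A}$ is the complex linear span of $\{M^{t,p}_{i,j}:(i,j,t,p)\in\mathcal{I}_m\}$. *)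

theory Defs
  imports Complex_Main
begin

text \<open>Matrices indexed by the vertex set X are represented as functions
  nat set => nat set => complex which vanish outside X x X.\<close>

type_synonym mat = "nat set \<Rightarrow> nat set \<Rightarrow> complex"

definition ground :: "nat \<Rightarrow> nat set" where
  "ground m = {1..2*m+1}"

definition verts :: "nat \<Rightarrow> nat set set" where
  "verts m = {x. x \<subseteq> ground m \<and> card x = m}"

definition base :: "nat \<Rightarrow> nat set" where
  "base m = {1..m}"

definition adj :: "nat \<Rightarrow> nat set \<Rightarrow> nat set \<Rightarrow> bool" where
  "adj m x y \<longleftrightarrow> x \<in> verts m \<and> y \<in> verts m \<and> x \<inter> y = {}"

inductive walk :: "nat \<Rightarrow> nat \<Rightarrow> nat set \<Rightarrow> nat set \<Rightarrow> bool" for m where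
  walk0: "x \<in> verts m \<Longrightarrow> walk m 0 x x"
| walkS: "walk m k x y \<Longrightarrow> adj m y z \<Longrightarrow> walk m (Suc k) x z"

text \<open>Graph distance in the Odd graph (which is connected).\<close>
definition gdist :: "nat \<Rightarrow> nat set \<Rightarrow> nat set \<Rightarrow> nat" where
  "gdist m x y = (LEAST k. walk m k x y)"

definition is_mat :: "nat \<Rightarrow> mat \<Rightarrow> bool" where
  "is_mat m M \<longleftrightarrow> (\<forall>x y. (x \<notin> verts m \<or> y \<notin> verts m) \<longrightarrow> M x y = 0)"

definition mmul :: "nat \<Rightarrow> mat \<Rightarrow> mat \<Rightarrow> mat" where
  "mmul m A B = (\<lambda>x y. \<Sum>z\<in>verts m. A x z * B z y)"

definition A1 :: "nat \<Rightarrow> mat" where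
  "A1 m = (\<lambda>x y. if adj m x y then 1 else 0)"

definition Estar :: "nat \<Rightarrow> nat \<Rightarrow> mat" where
  "Estar m i = (\<lambda>x y. if x = y \<and> x \<in> verts m \<and> gdist m (base m) x = i then 1 else 0)"

inductive_set terw :: "nat \<Rightarrow> mat set" for m where
  gen_A: "A1 m \<in> terw m"
| gen_E: "i \<le> m \<Longrightarrow> Estar m i \<in> terw m"
| add: "M \<in> terw m \<Longrightarrow> N \<in> terw m \<Longrightarrow> (\<lambda>x y. M x y + N x y) \<in> terw m"
| smul: "M \<in> terw m \<Longrightarrow> (\<lambda>x y. c * M x y) \<in> terw m"
| mul: "M \<in> terw m \<Longrightarrow> N \<in> terw m \<Longrightarrow> mmul m M N \<in> terw m"

definition tdist :: "nat set \<Rightarrow> nat set \<Rightarrow> nat set \<Rightarrow> nat \<times> nat \<times> nat \<times> nat" where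
  "tdist x y z = (card (x \<inter> y), card (x \<inter> z), card (y \<inter> z), card (x \<inter> y \<inter> z))"

definition Iset :: "nat \<Rightarrow> (nat \<times> nat \<times> nat \<times> nat) set" where
  "Iset m = {tdist x y z | x y z. x \<in> verts m \<and> y \<in> verts m \<and> z \<in> verts m}"

text \<open>Mq m (i,j,t,p) is the matrix M^{t,p}_{i,j}.\<close>
definition Mq :: "nat \<Rightarrow> nat \<times> nat \<times> nat \<times> nat \<Rightarrow> mat" where
  "Mq m q = (\<lambda>x y. if x \<in> verts m \<and> y \<in> verts m \<and> tdist (base m) x y = q then 1 else 0)"

definition Aspan :: "nat \<Rightarrow> mat set" where
  "Aspan m = {(\<lambda>x y. \<Sum>q\<in>Iset m. c q * Mq m q x y) | c. True}"

definition Mq_indep :: "nat \<Rightarrow> bool" where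
  "Mq_indep m \<longleftrightarrow> (\<forall>c. (\<lambda>x y. \<Sum>q\<in>Iset m. c q * Mq m q x y) = (\<lambda>x y. 0)
                        \<longrightarrow> (\<forall>q\<in>Iset m. c q = 0))"

definition is_aut :: "nat \<Rightarrow> (nat set \<Rightarrow> nat set) \<Rightarrow> bool" where
  "is_aut m \<sigma> \<longleftrightarrow> bij_betw \<sigma> (verts m) (verts m)
      \<and> (\<forall>x\<in>verts m. \<forall>y\<in>verts m. adj m x y \<longleftrightarrow> adj m (\<sigma> x) (\<sigma> y))"

definition stab :: "nat \<Rightarrow> (nat set \<Rightarrow> nat set) set" where
  "stab m = {\<sigma>. is_aut m \<sigma> \<and> \<sigma> (base m) = base m}"

definition centralizer :: "nat \<Rightarrow> mat set" where
  "centralizer m = {M. is_mat m M \<and>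
      (\<forall>\<sigma>\<in>stab m. \<forall>x\<in>verts m. \<forall>y\<in>verts m. M (\<sigma> x) (\<sigma> y) = M x y)}"

end

theory Submission
  imports Defs "HOL-Library.Complex_Order"
begin


lemma ind_int: "finite U \<Longrightarrow> int (card {z\<in>U. P z}) = (\<Sum>z\<in>U. if P z then 1 else 0)"
  by (simp add: sum.If_cases Int_def)

lemma card_neg: "finite W \<Longrightarrow> card {z\<in>W. \<not> R z \<and> Q z} = card {z\<in>W. Q z} - card {z\<in>W. R z \<and> Q z}"
proof -
  assume f: "finite W"
  have "{z\<in>W. \<not> R z \<and> Q z} = {z\<in>W. Q z} - {z\<in>W. R z \<and> Q z}" by auto
  moreover have "{z\<in>W. R z \<and> Q z} \<subseteq> {z\<in>W. Q z}" by auto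
  ultimately show ?thesis using f by (simp add: card_Diff_subset)
qed

lemma E1:
  assumes "finite U" "finite V" "card {z\<in>U. Q z} = card {z\<in>V. Q' z}"
    "card {z\<in>U. R z \<and> Q z} = card {z\<in>V. R' z \<and> Q' z}"
  shows "card {z\<in>U. R z = e \<and> Q z} = card {z\<in>V. R' z = e \<and> Q' z}"
proof (cases e)
  case True then show ?thesis using assms(4) by simp
next
  case False
  then show ?thesis using assms by (simp add: card_neg)
qed

lemma fiber_det:
  assumes "finite U" "finite V"
    "card U = card V"
    "card {z\<in>U. P1 z} = card {z\<in>V. Q1 z}"
    "card {z\<in>U. P2 z} = card {z\<in>V. Q2 z}"
    "card {z\<in>U. P3 z} = card {z\<in>V. Q3 z}"
    "card {z\<in>U. P1 z \<and> P2 z} = card {z\<in>V. Q1 z \<and> Q2 z}"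
    "card {z\<in>U. P1 z \<and> P3 z} = card {z\<in>V. Q1 z \<and> Q3 z}"
    "card {z\<in>U. P2 z \<and> P3 z} = card {z\<in>V. Q2 z \<and> Q3 z}"
    "card {z\<in>U. P1 z \<and> P2 z \<and> P3 z} = card {z\<in>V. Q1 z \<and> Q2 z \<and> Q3 z}"
  shows "card {z\<in>U. P1 z = e1 \<and> P2 z = e2 \<and> P3 z = e3} = card {z\<in>V. Q1 z = e1 \<and> Q2 z = e2 \<and> Q3 z = e3}"
proof -
  note E = E1[OF assms(1,2)]
  have c0: "card {z\<in>U. True} = card {z\<in>V. True}" using assms(3) by simp
  have a3: "card {z\<in>U. P3 z = e3 \<and> True} = card {z\<in>V. Q3 z = e3 \<and> True}"
    by (rule E) (use c0 assms(6) in simp_all)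
  have a13: "card {z\<in>U. P1 z \<and> (P3 z = e3 \<and> True)} = card {z\<in>V. Q1 z \<and> (Q3 z = e3 \<and> True)}"
  proof -
    have "card {z\<in>U. P3 z = e3 \<and> P1 z} = card {z\<in>V. Q3 z = e3 \<and> Q1 z}"
      by (rule E) (use assms(4,8) in \<open>simp_all add: conj_commute\<close>)
    then show ?thesis by (simp add: conj_commute)
  qed
  have a23: "card {z\<in>U. P2 z \<and> (P3 z = e3 \<and> True)} = card {z\<in>V. Q2 z \<and> (Q3 z = e3 \<and> True)}"
  proof -
    have "card {z\<in>U. P3 z = e3 \<and> P2 z} = card {z\<in>V. Q3 z = e3 \<and> Q2 z}"
      by (rule E) (use assms(5,9) in \<open>simp_all add: conj_commute\<close>)
    then show ?thesis by (simp add: conj_commute)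
  qed
  have a123: "card {z\<in>U. P2 z \<and> (P1 z \<and> (P3 z = e3 \<and> True))} = card {z\<in>V. Q2 z \<and> (Q1 z \<and> (Q3 z = e3 \<and> True))}"
  proof -
    have "card {z\<in>U. P3 z = e3 \<and> (P1 z \<and> P2 z)} = card {z\<in>V. Q3 z = e3 \<and> (Q1 z \<and> Q2 z)}"
      by (rule E) (use assms(7,10) in \<open>simp_all add: conj_commute conj_left_commute\<close>)
    then show ?thesis by (simp add: conj_commute conj_left_commute)
  qed
  have b23: "card {z\<in>U. P2 z = e2 \<and> (P3 z = e3 \<and> True)} = card {z\<in>V. Q2 z = e2 \<and> (Q3 z = e3 \<and> True)}"
    by (rule E[OF a3 a23])
  have b123: "card {z\<in>U. P2 z = e2 \<and> (P1 z \<and> (P3 z = e3 \<and> True))} = card {z\<in>V. Q2 z = e2 \<and> (Q1 z \<and> (Q3 z = e3 \<and> True))}"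
    by (rule E[OF a13 a123])
  have "card {z\<in>U. P1 z = e1 \<and> (P2 z = e2 \<and> (P3 z = e3 \<and> True))} = card {z\<in>V. Q1 z = e1 \<and> (Q2 z = e2 \<and> (Q3 z = e3 \<and> True))}"
  proof (rule E[OF b23])
    show "card {z\<in>U. P1 z \<and> P2 z = e2 \<and> P3 z = e3 \<and> True} = card {z\<in>V. Q1 z \<and> Q2 z = e2 \<and> Q3 z = e3 \<and> True}"
      using b123 by (simp add: conj_commute conj_left_commute)
  qed
  then show ?thesis by simp
qed

lemma relabel:
  assumes "finite U" "\<And>k. card {z\<in>U. f z = k} = card {z\<in>U. g z = k}"
  shows "\<exists>\<pi>. bij_betw \<pi> U U \<and> (\<forall>z\<in>U. g (\<pi> z) = f z)"
proof -
  have "\<forall>k. \<exists>h. bij_betw h {z\<in>U. f z = k} {z\<in>U. g z = k}"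
    using assms by (metis (no_types, lifting) finite_same_card_bij mem_Collect_eq finite_subset subsetI)
  then obtain h where h: "\<And>k. bij_betw (h k) {z\<in>U. f z = k} {z\<in>U. g z = k}" by metis
  define \<pi> where "\<pi> z = h (f z) z" for z
  have m: "\<pi> z \<in> U \<and> g (\<pi> z) = f z" if "z \<in> U" for z
    using h[of "f z"] that unfolding \<pi>_def bij_betw_def by auto
  have inj: "inj_on \<pi> U"
  proof (rule inj_onI)
    fix a b assume ab: "a \<in> U" "b \<in> U" "\<pi> a = \<pi> b"
    then have "f a = f b" using m by metis
    then show "a = b" using h[of "f a"] ab unfolding \<pi>_def bij_betw_def inj_on_def by auto
  qed
  have "\<pi> ` U = U" using endo_inj_surj[OF assms(1) _ inj] m by auto
  then show ?thesis using inj m unfolding bij_betw_def by blast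
qed

lemma fin_ground[simp]: "finite (ground m)" by (simp add: ground_def)
lemma card_ground[simp]: "card (ground m) = 2*m+1" by (simp add: ground_def)
lemma base_sub: "base m \<subseteq> ground m" by (auto simp: base_def ground_def)
lemma card_base[simp]: "card (base m) = m" by (simp add: base_def)
lemma fin_base[simp]: "finite (base m)" by (simp add: base_def)
lemma vertsD: "x \<in> verts m \<Longrightarrow> x \<subseteq> ground m \<and> card x = m \<and> finite x"
  by (auto simp: verts_def intro: finite_subset)
lemma base_verts: "base m \<in> verts m" using base_sub by (simp add: verts_def)
lemma finite_verts[simp]: "finite (verts m)"
  by (rule finite_subset[of _ "Pow (ground m)"]) (auto simp: verts_def)

lemma perm_verts:
  assumes "bij_betw \<pi> (ground m) (ground m)" "x \<in> verts m"
  shows "\<pi> ` x \<in> verts m"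
proof -
  have "inj_on \<pi> x" using assms vertsD bij_betw_imp_inj_on inj_on_subset by metis
  then show ?thesis using assms vertsD[OF assms(2)] unfolding verts_def bij_betw_def
    by (auto simp: card_image)
qed

lemma perm_int:
  assumes "bij_betw \<pi> (ground m) (ground m)" "x \<subseteq> ground m" "y \<subseteq> ground m"
  shows "\<pi> ` x \<inter> \<pi> ` y = \<pi> ` (x \<inter> y)"
  using assms by (metis bij_betw_imp_inj_on inj_on_image_Int)

lemma perm_card:
  assumes "bij_betw \<pi> (ground m) (ground m)" "x \<subseteq> ground m"
  shows "card (\<pi> ` x) = card x"
  using assms by (meson bij_betw_imp_inj_on card_image inj_on_subset)

lemma perm_aut:
  assumes "bij_betw \<pi> (ground m) (ground m)"
  shows "is_aut m ((`) \<pi>)"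
proof -
  have inj: "inj_on ((`) \<pi>) (verts m)"
  proof (rule inj_onI)
    fix x y assume "x \<in> verts m" "y \<in> verts m" "\<pi> ` x = \<pi> ` y"
    then show "x = y" using assms vertsD
      by (metis bij_betw_imp_inj_on inj_on_image_eq_iff)
  qed
  have "(`) \<pi> ` verts m = verts m"
    using endo_inj_surj[OF finite_verts _ inj] perm_verts[OF assms] by blast
  then have b: "bij_betw ((`) \<pi>) (verts m) (verts m)" using inj by (simp add: bij_betw_def)
  have "adj m x y \<longleftrightarrow> adj m (\<pi> ` x) (\<pi> ` y)" if "x \<in> verts m" "y \<in> verts m" for x y
    using that perm_verts[OF assms] perm_int[OF assms] vertsD unfolding adj_def by auto
  then show ?thesis using b by (simp add: is_aut_def)
qed

lemma perm_tdist:
  assumes "bij_betw \<pi> (ground m) (ground m)" "x \<subseteq> ground m" "y \<subseteq> ground m" "z \<subseteq> ground m"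
  shows "tdist (\<pi> ` x) (\<pi> ` y) (\<pi> ` z) = tdist x y z"
  using assms unfolding tdist_def
  by (simp add: perm_int perm_card Int_assoc le_infI2 le_infI1)

lemma image_eq_by_label:
  assumes "bij_betw \<pi> U U" "X \<subseteq> U" "X' \<subseteq> U" "\<And>z. z \<in> U \<Longrightarrow> (\<pi> z \<in> X') = (z \<in> X)"
  shows "\<pi> ` X = X'"
proof
  show "\<pi> ` X \<subseteq> X'" using assms by auto
  show "X' \<subseteq> \<pi> ` X"
  proof
    fix w assume w: "w \<in> X'"
    then obtain z where "z \<in> U" "w = \<pi> z" using assms(1,3) unfolding bij_betw_def by auto
    then show "w \<in> \<pi> ` X" using assms(4) w by auto
  qed
qed

lemma set_card_conv: "A \<subseteq> G \<Longrightarrow> {z\<in>G. z \<in> A} = A" by auto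

lemma trans_pairs:
  assumes "x \<in> verts m" "y \<in> verts m" "x' \<in> verts m" "y' \<in> verts m"
    "tdist (base m) x y = tdist (base m) x' y'"
  shows "\<exists>\<sigma>\<in>stab m. \<sigma> x = x' \<and> \<sigma> y = y'"
proof -
  let ?G = "ground m" and ?B = "base m"
  have sx: "x \<subseteq> ?G" "y \<subseteq> ?G" "x' \<subseteq> ?G" "y' \<subseteq> ?G" "?B \<subseteq> ?G"
    using assms vertsD base_sub by auto
  have cx: "card x = m" "card y = m" "card x' = m" "card y' = m" using assms vertsD by auto
  have t: "card (?B \<inter> x) = card (?B \<inter> x')" "card (?B \<inter> y) = card (?B \<inter> y')"
     "card (x \<inter> y) = card (x' \<inter> y')" "card (?B \<inter> x \<inter> y) = card (?B \<inter> x' \<inter> y')"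
    using assms(5) by (auto simp: tdist_def)
  have h: "\<And>A B. A \<subseteq> ?G \<Longrightarrow> {z\<in>?G. z \<in> A \<and> z \<in> B} = A \<inter> B" by auto
  have h3: "\<And>A B C. A \<subseteq> ?G \<Longrightarrow> {z\<in>?G. z \<in> A \<and> z \<in> B \<and> z \<in> C} = A \<inter> B \<inter> C" by auto
  have fib: "card {z\<in>?G. (z\<in>?B, z\<in>x, z\<in>y) = k} = card {z\<in>?G. (z\<in>?B, z\<in>x', z\<in>y') = k}" for k
  proof -
    obtain e1 e2 e3 where k: "k = (e1, e2, e3)" by (cases k) auto
    show ?thesis unfolding k prod.inject
      by (rule fiber_det) (use sx cx t in \<open>simp_all add: set_card_conv h h3\<close>)
  qed
  obtain \<pi> where \<pi>: "bij_betw \<pi> ?G ?G" "\<forall>z\<in>?G. (\<pi> z\<in>?B, \<pi> z\<in>x', \<pi> z\<in>y') = (z\<in>?B, z\<in>x, z\<in>y)"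
    using relabel[OF fin_ground fib] by blast
  have "\<pi> ` ?B = ?B" by (rule image_eq_by_label[OF \<pi>(1)]) (use sx \<pi>(2) in auto)
  moreover have "\<pi> ` x = x'" by (rule image_eq_by_label[OF \<pi>(1)]) (use sx \<pi>(2) in auto)
  moreover have "\<pi> ` y = y'" by (rule image_eq_by_label[OF \<pi>(1)]) (use sx \<pi>(2) in auto)
  ultimately show ?thesis using perm_aut[OF \<pi>(1)] unfolding stab_def by auto
qed

lemma realize:
  assumes "x0 \<in> verts m" "y \<in> verts m" "z \<in> verts m"
  shows "\<exists>y' z'. y' \<in> verts m \<and> z' \<in> verts m \<and> tdist (base m) y' z' = tdist x0 y z"
proof -
  let ?G = "ground m" and ?B = "base m"
  have sx: "x0 \<subseteq> ?G" "?B \<subseteq> ?G" "y \<subseteq> ?G" "z \<subseteq> ?G" using assms vertsD base_sub by auto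
  have fib: "card {z\<in>?G. (z\<in>x0) = k} = card {z\<in>?G. (z\<in>?B) = k}" for k
  proof (cases k)
    case True then show ?thesis using sx assms vertsD by (simp add: set_card_conv)
  next
    case False
    have "{z\<in>?G. (z\<in>x0) = k} = ?G - x0" "{z\<in>?G. (z\<in>?B) = k} = ?G - ?B" using False by auto
    then show ?thesis using sx assms vertsD by (simp add: card_Diff_subset)
  qed
  obtain \<pi> where \<pi>: "bij_betw \<pi> ?G ?G" "\<forall>z\<in>?G. (\<pi> z\<in>?B) = (z\<in>x0)"
    using relabel[OF fin_ground fib] by blast
  have "\<pi> ` x0 = ?B" by (rule image_eq_by_label[OF \<pi>(1)]) (use sx \<pi>(2) in auto)
  then show ?thesis using perm_verts[OF \<pi>(1)] assms perm_tdist[OF \<pi>(1) sx(1) sx(3) sx(4)]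
    by metis
qed

section \<open>T is contained in the centralizer\<close>

lemma walk_verts: "walk m k x y \<Longrightarrow> x \<in> verts m \<and> y \<in> verts m"
  by (induction rule: walk.induct) (auto simp: adj_def)

lemma aut_walk: assumes "is_aut m \<sigma>" "walk m k x y" shows "walk m k (\<sigma> x) (\<sigma> y)"
  using assms(2)
proof (induction rule: walk.induct)
  case (walk0 x) then show ?case
    by (metis assms(1) bij_betwE is_aut_def walk.walk0)
next
  case (walkS k x y z)
  then have "adj m (\<sigma> y) (\<sigma> z)" using assms(1) by (auto simp: is_aut_def adj_def)
  then show ?case using walkS walk.walkS by blast
qed

lemma aut_inv:
  assumes "is_aut m \<sigma>"
  shows "is_aut m (inv_into (verts m) \<sigma>)"
proof -
  let ?t = "inv_into (verts m) \<sigma>"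
  have b: "bij_betw \<sigma> (verts m) (verts m)" using assms is_aut_def by blast
  have b': "bij_betw ?t (verts m) (verts m)" using bij_betw_inv_into[OF b] .
  have "adj m x y \<longleftrightarrow> adj m (?t x) (?t y)" if "x \<in> verts m" "y \<in> verts m" for x y
  proof -
    have "?t x \<in> verts m" "?t y \<in> verts m" using b' that bij_betwE by blast+
    moreover have "\<sigma> (?t x) = x" "\<sigma> (?t y) = y" using b that bij_betw_inv_into_right by metis+
    ultimately show ?thesis using assms unfolding is_aut_def by metis
  qed
  then show ?thesis using b' is_aut_def by blast
qed

lemma stab_gdist:
  assumes "\<sigma> \<in> stab m" "x \<in> verts m"
  shows "gdist m (base m) (\<sigma> x) = gdist m (base m) x"
proof -
  have a: "is_aut m \<sigma>" and sb: "\<sigma> (base m) = base m" using assms(1) stab_def by auto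
  let ?t = "inv_into (verts m) \<sigma>"
  have b: "bij_betw \<sigma> (verts m) (verts m)" using a is_aut_def by blast
  have t1: "?t (\<sigma> x) = x" using b assms(2) bij_betw_inv_into_left by metis
  have t2: "?t (base m) = base m" using b base_verts sb bij_betw_inv_into_left by metis
  have "walk m k (base m) (\<sigma> x) \<longleftrightarrow> walk m k (base m) x" for k
    using aut_walk[OF a, of k "base m" x] aut_walk[OF aut_inv[OF a], of k "base m" "\<sigma> x"] sb t1 t2
    by auto
  then show ?thesis unfolding gdist_def by simp
qed

lemma terw_mat: "M \<in> terw m \<Longrightarrow> is_mat m M"
proof (induction rule: terw.induct)
  case gen_A then show ?case by (auto simp: is_mat_def A1_def adj_def)
next
  case (gen_E i) then show ?case by (auto simp: is_mat_def Estar_def)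
next
  case (add M N) then show ?case by (auto simp: is_mat_def)
next
  case (smul M c) then show ?case by (auto simp: is_mat_def)
next
  case (mul M N) then show ?case by (auto simp: is_mat_def mmul_def)
qed

lemma stab_bij: "\<sigma> \<in> stab m \<Longrightarrow> bij_betw \<sigma> (verts m) (verts m)"
  by (auto simp: stab_def is_aut_def)

lemma terw_inv:
  assumes "M \<in> terw m" "\<sigma> \<in> stab m" "x \<in> verts m" "y \<in> verts m"
  shows "M (\<sigma> x) (\<sigma> y) = M x y"
  using assms
proof (induction arbitrary: x y rule: terw.induct)
  case gen_A
  have "\<sigma> x \<in> verts m" "\<sigma> y \<in> verts m" using gen_A stab_bij bij_betwE by blast+
  then show ?case using gen_A by (auto simp: A1_def stab_def is_aut_def)
next
  case (gen_E i)
  have v: "\<sigma> x \<in> verts m" "\<sigma> y \<in> verts m" using gen_E stab_bij bij_betwE by blast+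
  have "\<sigma> x = \<sigma> y \<longleftrightarrow> x = y" using gen_E stab_bij bij_betw_imp_inj_on inj_on_eq_iff by metis
  then show ?case using gen_E v stab_gdist by (auto simp: Estar_def)
next
  case (add M N) then show ?case by simp
next
  case (smul M c) then show ?case by simp
next
  case (mul M N)
  have b: "bij_betw \<sigma> (verts m) (verts m)" using mul stab_bij by blast
  have "mmul m M N (\<sigma> x) (\<sigma> y) = (\<Sum>z\<in>verts m. M (\<sigma> x) (\<sigma> z) * N (\<sigma> z) (\<sigma> y))"
    unfolding mmul_def using sum.reindex_bij_betw[OF b, of "\<lambda>z. M (\<sigma> x) z * N z (\<sigma> y)"] by simp
  also have "\<dots> = mmul m M N x y" unfolding mmul_def using mul by (intro sum.cong) auto
  finally show ?case .
qed

lemma terw_cent: "M \<in> terw m \<Longrightarrow> M \<in> centralizer m"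
  using terw_mat terw_inv unfolding centralizer_def by blast



section \<open>Centralizer, span, independence\<close>

lemma cent_const:
  assumes "M \<in> centralizer m" "x \<in> verts m" "y \<in> verts m" "x' \<in> verts m" "y' \<in> verts m"
    "tdist (base m) x y = tdist (base m) x' y'"
  shows "M x y = M x' y'"
proof -
  obtain \<sigma> where "\<sigma> \<in> stab m" "\<sigma> x = x'" "\<sigma> y = y'" using trans_pairs[OF assms(2-6)] by blast
  moreover have "M (\<sigma> x) (\<sigma> y) = M x y" using assms(1-3) \<open>\<sigma> \<in> stab m\<close> unfolding centralizer_def by blast
  ultimately show ?thesis by simp
qed

lemma Iset_base: "x \<in> verts m \<Longrightarrow> y \<in> verts m \<Longrightarrow> tdist (base m) x y \<in> Iset m"
  using base_verts unfolding Iset_def by blast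

lemma Iset_finite: "finite (Iset m)"
proof (rule finite_subset)
  show "Iset m \<subseteq> {..m} \<times> {..m} \<times> {..m} \<times> {..m}"
  proof
    fix q assume "q \<in> Iset m"
    then obtain x y z where q: "q = tdist x y z" "x \<in> verts m" "y \<in> verts m" "z \<in> verts m"
      unfolding Iset_def by blast
    have "card (x \<inter> y) \<le> m" "card (x \<inter> z) \<le> m" "card (y \<inter> z) \<le> m" "card (x \<inter> y \<inter> z) \<le> m"
      using q vertsD by (metis card_mono inf_le1 order_trans)+
    then show "q \<in> {..m} \<times> {..m} \<times> {..m} \<times> {..m}" using q(1) by (simp add: tdist_def)
  qed
qed simp

lemma sum_Mq_eval:
  assumes "x \<in> verts m" "y \<in> verts m"
  shows "(\<Sum>q\<in>Iset m. c q * Mq m q x y) = c (tdist (base m) x y)"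
proof -
  have "(\<Sum>q\<in>Iset m. c q * Mq m q x y) = (\<Sum>q\<in>Iset m. if q = tdist (base m) x y then c q else 0)"
    using assms by (intro sum.cong) (auto simp: Mq_def)
  also have "\<dots> = c (tdist (base m) x y)" using Iset_base[OF assms] Iset_finite by simp
  finally show ?thesis .
qed

lemma sum_Mq_out:
  assumes "x \<notin> verts m \<or> y \<notin> verts m"
  shows "(\<Sum>q\<in>Iset m. c q * Mq m q x y) = 0"
  using assms by (auto simp: Mq_def)

lemma cent_span: "M \<in> centralizer m \<Longrightarrow> M \<in> Aspan m"
proof -
  assume M: "M \<in> centralizer m"
  define R where "R q = (SOME p. fst p \<in> verts m \<and> snd p \<in> verts m \<and> tdist (base m) (fst p) (snd p) = q)" for q
  define c where "c q = M (fst (R q)) (snd (R q))" for q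
  have "M x y = (\<Sum>q\<in>Iset m. c q * Mq m q x y)" for x y
  proof (cases "x \<in> verts m \<and> y \<in> verts m")
    case True
    let ?q = "tdist (base m) x y"
    have "fst (R ?q) \<in> verts m \<and> snd (R ?q) \<in> verts m \<and> tdist (base m) (fst (R ?q)) (snd (R ?q)) = ?q"
      unfolding R_def by (rule someI[of _ "(x,y)"]) (use True in auto)
    then have "M (fst (R ?q)) (snd (R ?q)) = M x y"
      using cent_const[OF M, of "fst (R ?q)" "snd (R ?q)" x y] True by blast
    then have "c ?q = M x y" unfolding c_def .
    then show ?thesis using True sum_Mq_eval by metis
  next
    case False
    then have o: "x \<notin> verts m \<or> y \<notin> verts m" by blast
    then have "M x y = 0" using M unfolding centralizer_def is_mat_def by blast
    then show ?thesis using sum_Mq_out[OF o] by simp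
  qed
  then show "M \<in> Aspan m" unfolding Aspan_def by blast
qed

lemma indep: "Mq_indep m"
  unfolding Mq_indep_def
proof (intro allI impI ballI)
  fix c q assume z: "(\<lambda>x y. \<Sum>q\<in>Iset m. c q * Mq m q x y) = (\<lambda>x y. 0)" and q: "q \<in> Iset m"
  then obtain x0 y z where "q = tdist x0 y z" "x0 \<in> verts m" "y \<in> verts m" "z \<in> verts m"
    unfolding Iset_def by blast
  then obtain y' z' where yz: "y' \<in> verts m" "z' \<in> verts m" "tdist (base m) y' z' = q"
    using realize by metis
  have "(\<Sum>q\<in>Iset m. c q * Mq m q y' z') = 0" using fun_cong[OF fun_cong[OF z]] by simp
  then show "c q = 0" using sum_Mq_eval[OF yz(1,2)] yz(3) by simp
qed

lemma terw_zero: "(\<lambda>x y. 0) \<in> terw m"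
  using terw.smul[OF terw.gen_A, where c=0 and m=m] by simp

lemma terw_sum: "finite S \<Longrightarrow> (\<And>q. q \<in> S \<Longrightarrow> F q \<in> terw m) \<Longrightarrow> (\<lambda>x y. \<Sum>q\<in>S. F q x y) \<in> terw m"
proof (induction S rule: finite_induct)
  case empty then show ?case using terw_zero by simp
next
  case (insert a S)
  then show ?case using terw.add[of "F a" m "\<lambda>x y. \<Sum>q\<in>S. F q x y"] by simp
qed

lemma span_terw: "(\<And>q. Mq m q \<in> terw m) \<Longrightarrow> Aspan m \<subseteq> terw m"
proof
  fix M assume h: "\<And>q. Mq m q \<in> terw m" and "M \<in> Aspan m"
  then obtain c where "M = (\<lambda>x y. \<Sum>q\<in>Iset m. c q * Mq m q x y)" unfolding Aspan_def by blast
  then show "M \<in> terw m" using terw_sum[OF Iset_finite, where F="\<lambda>q x y. c q * Mq m q x y"] h terw.smul by auto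
qed

lemma main_reduction:
  assumes "\<And>q. Mq m q \<in> terw m"
  shows "Aspan m = terw m \<and> Mq_indep m \<and> terw m = centralizer m"
  using span_terw[OF assms] terw_cent cent_span indep by blast


section \<open>Levels and distance from the base vertex\<close>

definition lv :: "nat \<Rightarrow> nat set \<Rightarrow> nat" where
  "lv m x = card (base m \<inter> x)"

definition dl :: "nat \<Rightarrow> nat \<Rightarrow> nat" where
  "dl m a = min (2*(m-a)) (2*a+1)"

lemma lv_le: "x \<in> verts m \<Longrightarrow> lv m x \<le> m"
  unfolding lv_def using card_mono[OF fin_base, of "base m \<inter> x"] by simp

lemma card_rest: "x \<in> verts m \<Longrightarrow> card (x - base m) = m - lv m x"
  unfolding lv_def using card_Int_Diff[of x "base m"] vertsD[of x m]
  by (simp add: Int_commute)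

lemma card_C: "card (ground m - base m) = m + 1"
  using card_Diff_subset[OF fin_base base_sub] by simp

lemma adj_lv:
  assumes "adj m x y"
  shows "lv m x + lv m y \<le> m \<and> m \<le> lv m x + lv m y + 1"
proof -
  have v: "x \<in> verts m" "y \<in> verts m" "x \<inter> y = {}" using assms adj_def by auto
  have "card (base m \<inter> x) + card (base m \<inter> y) = card ((base m \<inter> x) \<union> (base m \<inter> y))"
    using v(3) by (intro card_Un_disjoint[symmetric]) auto
  also have "\<dots> \<le> m" using card_mono[OF fin_base, of "(base m \<inter> x) \<union> (base m \<inter> y)"] by auto
  finally have 1: "lv m x + lv m y \<le> m" unfolding lv_def .
  have "card (x - base m) + card (y - base m) = card ((x - base m) \<union> (y - base m))"
    using v vertsD by (intro card_Un_disjoint[symmetric]) auto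
  also have "\<dots> \<le> card (ground m - base m)"
    using v vertsD by (intro card_mono) auto
  finally have "(m - lv m x) + (m - lv m y) \<le> m + 1" using card_rest v card_C by simp
  then show ?thesis using 1 lv_le v by linarith
qed

lemma walk_lower0: "walk m k b x \<Longrightarrow> b = base m \<Longrightarrow> dl m (lv m x) \<le> k"
proof (induction rule: walk.induct)
  case (walk0 x)
  have "lv m (base m) = m" by (simp add: lv_def)
  then show ?case using walk0 by (simp add: dl_def)
next
  case (walkS k x y z)
  have "lv m y \<le> m" "lv m z \<le> m" using walkS adj_def lv_le by auto
  then show ?case using adj_lv[OF walkS(2)] walkS(3,4) unfolding dl_def by linarith
qed

lemma walk_lower: "walk m k (base m) x \<Longrightarrow> dl m (lv m x) \<le> k"
  using walk_lower0 by blast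

lemma walk_upper: "x \<in> verts m \<Longrightarrow> walk m (dl m (lv m x)) (base m) x"
proof (induction "dl m (lv m x)" arbitrary: x)
  case 0
  have "lv m x = m" using 0 lv_le[OF 0(2)] unfolding dl_def by linarith
  then have "card (base m \<inter> x) = card (base m)" unfolding lv_def by simp
  then have "base m \<inter> x = base m"
    using card_subset_eq[OF fin_base, of "base m \<inter> x"] by blast
  then have "base m \<subseteq> x" by blast
  moreover have "card (base m) = card x" "finite x" using vertsD[OF 0(2)] by auto
  ultimately have "base m = x" using card_subset_eq[of x "base m"] by blast
  moreover have "walk m 0 x x" by (rule walk.walk0[OF 0(2)])
  ultimately show ?case using 0(1) by simp
next
  case (Suc n)
  let ?a = "lv m x"
  have a: "?a \<le> m" using lv_le Suc(3) by blast
  have xs: "x \<subseteq> ground m" "card x = m" "finite x" using vertsD Suc(3) by auto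
  have cx: "card (x - base m) = m - ?a" using card_rest Suc(3) .
  have cgx: "card (ground m - x) = m + 1" using xs card_Diff_subset[of x "ground m"] by simp
  obtain u where u: "u \<in> ground m - x" "(u \<in> base m) = (2*(m-?a) \<le> 2*?a+1)"
  proof (cases "2*(m-?a) \<le> 2*?a+1")
    case True
    have "?a < m" using True Suc(2) unfolding dl_def by linarith
    then have "card (base m \<inter> x) \<noteq> card (base m)" unfolding lv_def by simp
    then have "base m \<inter> x \<noteq> base m" by metis
    then obtain u where "u \<in> base m" "u \<notin> x" by blast
    then show ?thesis using that True base_sub by blast
  next
    case False
    have e: "(ground m - base m) \<inter> x = x - base m" using xs by blast
    have "card ((ground m - base m) - x) = card (ground m - base m) - card ((ground m - base m) \<inter> x)"
      by (rule card_Diff_subset_Int) simp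
    then have "card ((ground m - base m) - x) = (m+1) - (m - ?a)" using e card_C cx by simp
    then have "card ((ground m - base m) - x) \<noteq> 0" using a by simp
    then obtain u where "u \<in> (ground m - base m) - x" by (metis card.empty ex_in_conv)
    then show ?thesis using that False by blast
  qed
  define y where "y = (ground m - x) - {u}"
  have "card y = m" unfolding y_def using u(1) cgx by (simp add: card_Diff_singleton)
  then have yv: "y \<in> verts m" unfolding y_def verts_def by auto
  have adj: "adj m y x" using yv Suc(3) unfolding adj_def y_def by blast
  have bey: "base m \<inter> y = (base m - x) - {u}" using base_sub unfolding y_def by blast
  have cbx: "card (base m - x) = m - ?a"
    using card_Diff_subset_Int[of "base m" x] unfolding lv_def by simp
  have ly: "lv m y = (m - ?a) - (if u \<in> base m then 1 else 0)"
  proof (cases "u \<in> base m")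
    case True
    then have "u \<in> base m - x" using u by blast
    then show ?thesis using True cbx bey by (simp add: card_Diff_singleton lv_def)
  next
    case False
    then have "base m \<inter> y = base m - x" using bey by blast
    then show ?thesis using False cbx by (simp add: lv_def)
  qed
  have "dl m (lv m y) = n"
  proof (cases "u \<in> base m")
    case True
    then show ?thesis using ly u(2) a Suc(2) unfolding dl_def by simp
  next
    case False
    then show ?thesis using ly u(2) a Suc(2) unfolding dl_def by simp
  qed
  then have "walk m n (base m) y" using Suc(1) yv by blast
  then have "walk m (Suc n) (base m) x" using walk.walkS[OF _ adj] by blast
  then show ?case using Suc(2) by simp
qed

lemma gdist_lv: "x \<in> verts m \<Longrightarrow> gdist m (base m) x = dl m (lv m x)"
  unfolding gdist_def using walk_upper walk_lower by (intro Least_equality) auto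

lemma odd_ne: "(2::nat)*p \<noteq> 2*q+1" by presburger

lemma dl_inj: "a \<le> m \<Longrightarrow> b \<le> m \<Longrightarrow> dl m a = dl m b \<Longrightarrow> a = b"
  unfolding dl_def min_def using odd_ne[of "m-a" b] odd_ne[of "m-b" a] by (auto split: if_splits)

lemma dl_le: "dl m a \<le> m"
  unfolding dl_def by linarith

definition Lp :: "nat \<Rightarrow> nat \<Rightarrow> mat" where
  "Lp m a = (\<lambda>x y. if x = y \<and> x \<in> verts m \<and> lv m x = a then 1 else 0)"

lemma Lp_terw: "a \<le> m \<Longrightarrow> Lp m a \<in> terw m"
proof -
  assume a: "a \<le> m"
  have "Lp m a = Estar m (dl m a)"
    unfolding Lp_def Estar_def using gdist_lv dl_inj lv_le a by (intro ext) metis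
  then show ?thesis using terw.gen_E[OF dl_le] by simp
qed


lemma mmul_Lp_left: "mmul m (Lp m a) M = (\<lambda>x y. if x \<in> verts m \<and> lv m x = a then M x y else 0)"
proof (intro ext)
  fix x y
  have "mmul m (Lp m a) M x y = (\<Sum>z\<in>verts m. if z = x then (if x \<in> verts m \<and> lv m x = a then M x y else 0) else 0)"
    unfolding mmul_def by (rule sum.cong) (auto simp: Lp_def)
  also have "\<dots> = (if x \<in> verts m \<and> lv m x = a then M x y else 0)" by simp
  finally show "mmul m (Lp m a) M x y = (if x \<in> verts m \<and> lv m x = a then M x y else 0)" .
qed

lemma mmul_Lp_right: "mmul m M (Lp m a) = (\<lambda>x y. if y \<in> verts m \<and> lv m y = a then M x y else 0)"
proof (intro ext)
  fix x y
  have "mmul m M (Lp m a) x y = (\<Sum>z\<in>verts m. if z = y then (if y \<in> verts m \<and> lv m y = a then M x y else 0) else 0)"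
    unfolding mmul_def by (rule sum.cong) (auto simp: Lp_def)
  also have "\<dots> = (if y \<in> verts m \<and> lv m y = a then M x y else 0)" by simp
  finally show "mmul m M (Lp m a) x y = (if y \<in> verts m \<and> lv m y = a then M x y else 0)" .
qed

definition W :: "nat \<Rightarrow> nat \<Rightarrow> nat \<Rightarrow> nat \<Rightarrow> mat" where
  "W m c b c' = mmul m (mmul m (mmul m (Lp m c) (A1 m)) (Lp m b)) (mmul m (A1 m) (Lp m c'))"

lemma W_terw: "c \<le> m \<Longrightarrow> b \<le> m \<Longrightarrow> c' \<le> m \<Longrightarrow> W m c b c' \<in> terw m"
  unfolding W_def by (intro terw.mul terw.gen_A Lp_terw)

lemma W_eq: "W m c b c' w y = (\<Sum>z\<in>verts m.
   (if w \<in> verts m \<and> lv m w = c \<and> z \<in> verts m \<and> lv m z = b \<and> adj m w z then 1 else 0) *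
   (if y \<in> verts m \<and> lv m y = c' \<and> adj m z y then 1 else 0))"
  unfolding W_def mmul_Lp_left mmul_Lp_right
  unfolding mmul_def
  by (intro sum.cong) (auto simp: A1_def)

definition nn :: "mat \<Rightarrow> bool" where "nn M \<longleftrightarrow> (\<forall>x y. 0 \<le> M x y)"

lemma c01[simp]: "0 \<le> (1::complex)" "0 < (1::complex)" "0 \<le> (0::complex)"
  by (auto simp: less_eq_complex_def less_complex_def)

lemma nn_Mq: "nn (Mq m q)" by (simp add: nn_def Mq_def)

lemma nn_mmul: "nn M \<Longrightarrow> nn N \<Longrightarrow> nn (mmul m M N)"
  unfolding nn_def mmul_def by (auto intro!: sum_nonneg mult_nonneg_nonneg)

lemma nn_W: "nn (W m c b c')"
  unfolding nn_def W_eq by (auto intro!: sum_nonneg mult_nonneg_nonneg)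

lemma sum_ne0: assumes "sum f A \<noteq> (0::complex)" shows "\<exists>a\<in>A. f a \<noteq> 0"
proof (rule ccontr)
  assume "\<not> (\<exists>a\<in>A. f a \<noteq> 0)"
  then have "\<forall>a\<in>A. f a = 0" by simp
  then have "sum f A = 0" by (rule sum.neutral)
  then show False using assms by simp
qed

lemma mmul_supp: "mmul m M N x y \<noteq> 0 \<Longrightarrow> \<exists>w\<in>verts m. M x w \<noteq> 0 \<and> N w y \<noteq> 0"
  unfolding mmul_def by (drule sum_ne0) auto

lemma cpos_mult: "0 < (a::complex) \<Longrightarrow> 0 < b \<Longrightarrow> 0 < a * b"
  by (auto simp: less_complex_def)

lemma mmul_pos:
  assumes "nn M" "nn N" "w \<in> verts m" "0 < M x w" "0 < N w y"
  shows "0 < mmul m M N x y"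
  unfolding mmul_def
proof (rule sum_pos2[OF finite_verts assms(3)])
  show "0 < M x w * N w y" using cpos_mult assms(4,5) by blast
  show "\<And>i. i \<in> verts m \<Longrightarrow> 0 \<le> M x i * N i y" using assms(1,2) nn_def mult_nonneg_nonneg by blast
qed

lemma W_supp: "W m c b c' w y \<noteq> 0 \<Longrightarrow> \<exists>z\<in>verts m. w \<in> verts m \<and> y \<in> verts m \<and> lv m w = c \<and> lv m z = b \<and> lv m y = c' \<and> adj m w z \<and> adj m z y"
  unfolding W_eq by (drule sum_ne0) (auto split: if_splits)

lemma W_pos:
  assumes "z \<in> verts m" "w \<in> verts m" "y \<in> verts m" "lv m w = c" "lv m z = b" "lv m y = c'" "adj m w z" "adj m z y"
  shows "0 < W m c b c' w y"
  unfolding W_eq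
proof (rule sum_pos2[OF finite_verts assms(1)])
  show "0 < (if w \<in> verts m \<and> lv m w = c \<and> z \<in> verts m \<and> lv m z = b \<and> adj m w z then 1 else 0) *
    (if y \<in> verts m \<and> lv m y = c' \<and> adj m z y then 1 else (0::complex))" using assms by simp
qed (auto intro: mult_nonneg_nonneg)

definition tr :: "mat \<Rightarrow> mat" where "tr M = (\<lambda>x y. M y x)"

lemma terw_tr: "M \<in> terw m \<Longrightarrow> tr M \<in> terw m"
proof (induction rule: terw.induct)
  case gen_A
  have "tr (A1 m) = A1 m" unfolding tr_def A1_def adj_def by (intro ext) (auto simp: Int_commute)
  then show ?case using terw.gen_A by simp
next
  case (gen_E i)
  have "tr (Estar m i) = Estar m i" unfolding tr_def Estar_def by (intro ext) auto
  then show ?case using terw.gen_E[OF gen_E] by simp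
next
  case (add M N) then show ?case using terw.add[OF add.IH] by (simp add: tr_def)
next
  case (smul M c) then show ?case using terw.smul[OF smul.IH] by (simp add: tr_def)
next
  case (mul M N)
  have "tr (mmul m M N) = mmul m (tr N) (tr M)" unfolding tr_def mmul_def by (auto simp: mult.commute)
  then show ?case using terw.mul[OF mul.IH(2) mul.IH(1)] by simp
qed

lemma Mq_tr: "Mq m (j,i,t,p) = tr (Mq m (i,j,t,p))"
  unfolding tr_def Mq_def tdist_def by (intro ext) (auto simp: Int_commute Int_left_commute)

lemma terw_lin: "M \<in> terw m \<Longrightarrow> N \<in> terw m \<Longrightarrow> (\<lambda>x y. a * (M x y + (-1) * N x y)) \<in> terw m"
  using terw.smul[OF terw.add[OF _ terw.smul]] by blast

lemma tri:
  assumes N: "N \<in> terw m"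
    and pos: "\<And>x y. x \<in> verts m \<Longrightarrow> y \<in> verts m \<Longrightarrow> tdist (base m) x y = q \<Longrightarrow> N x y \<noteq> 0"
    and supp: "\<And>x y. x \<in> verts m \<Longrightarrow> y \<in> verts m \<Longrightarrow> N x y \<noteq> 0 \<Longrightarrow> tdist (base m) x y \<noteq> q
                 \<Longrightarrow> Mq m (tdist (base m) x y) \<in> terw m"
  shows "Mq m q \<in> terw m"
proof (cases "\<exists>x y. x \<in> verts m \<and> y \<in> verts m \<and> tdist (base m) x y = q")
  case False
  then have "Mq m q = (\<lambda>x y. 0)" unfolding Mq_def by (intro ext) auto
  then show ?thesis using terw_zero by simp
next
  case True
  then obtain x0 y0 where xy0: "x0 \<in> verts m" "y0 \<in> verts m" "tdist (base m) x0 y0 = q" by blast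
  have qI: "q \<in> Iset m" using Iset_base xy0 by blast
  obtain c where c: "N = (\<lambda>x y. \<Sum>q\<in>Iset m. c q * Mq m q x y)"
    using cent_span[OF terw_cent[OF N]] unfolding Aspan_def by blast
  have cq: "c q \<noteq> 0" using pos[OF xy0] c sum_Mq_eval[OF xy0(1,2)] xy0(3) by simp
  define S where "S = {q'\<in>Iset m. q' \<noteq> q \<and> c q' \<noteq> 0}"
  have fS: "finite S" using Iset_finite S_def by simp
  have ST: "Mq m q' \<in> terw m" if "q' \<in> S" for q'
  proof -
    have q': "q' \<in> Iset m" "q' \<noteq> q" "c q' \<noteq> 0" using that S_def by auto
    then obtain a b d where "q' = tdist a b d" "a \<in> verts m" "b \<in> verts m" "d \<in> verts m"
      unfolding Iset_def by blast
    then obtain x y where xy: "x \<in> verts m" "y \<in> verts m" "tdist (base m) x y = q'"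
      using realize by metis
    have "N x y = c q'" using c sum_Mq_eval[OF xy(1,2)] xy(3) by simp
    then show ?thesis using supp[OF xy(1,2)] xy(3) q' by simp
  qed
  have e: "N x y = c q * Mq m q x y + (\<Sum>q'\<in>S. c q' * Mq m q' x y)" for x y
  proof -
    have "N x y = c q * Mq m q x y + (\<Sum>q'\<in>Iset m - {q}. c q' * Mq m q' x y)"
      using c sum.remove[OF Iset_finite qI, of "\<lambda>q'. c q' * Mq m q' x y"] by simp
    also have "(\<Sum>q'\<in>Iset m - {q}. c q' * Mq m q' x y) = (\<Sum>q'\<in>S. c q' * Mq m q' x y)"
      by (rule sum.mono_neutral_right) (auto simp: S_def Iset_finite)
    finally show ?thesis .
  qed
  have "Mq m q = (\<lambda>x y. inverse (c q) * (N x y + (-1) * (\<Sum>q'\<in>S. c q' * Mq m q' x y)))"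
    using cq by (intro ext) (simp add: e field_simps)
  moreover have "(\<lambda>x y. \<Sum>q'\<in>S. c q' * Mq m q' x y) \<in> terw m"
    using terw_sum[OF fS, where F="\<lambda>q' x y. c q' * Mq m q' x y"] ST terw.smul by blast
  ultimately show ?thesis using terw_lin[OF N] by simp
qed


section \<open>Combinatorics of pairs\<close>

definition pq :: "nat \<Rightarrow> nat set \<Rightarrow> nat set \<Rightarrow> nat" where
  "pq m x y = card (base m \<inter> x \<inter> y)"
definition sq :: "nat \<Rightarrow> nat set \<Rightarrow> nat set \<Rightarrow> nat" where
  "sq m x y = card ((x \<inter> y) - base m)"

lemma tdist_eq:
  assumes "x \<in> verts m" "y \<in> verts m"
  shows "tdist (base m) x y = (lv m x, lv m y, pq m x y + sq m x y, pq m x y)"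
proof -
  have "finite (x \<inter> y)" using assms vertsD by blast
  then have "card (x \<inter> y) = card ((x \<inter> y) \<inter> base m) + card ((x \<inter> y) - base m)"
    by (rule card_Int_Diff)
  moreover have "(x \<inter> y) \<inter> base m = base m \<inter> x \<inter> y" by blast
  ultimately show ?thesis unfolding tdist_def lv_def pq_def sq_def by simp
qed

lemma pair_bounds:
  assumes "x \<in> verts m" "y \<in> verts m"
  shows "pq m x y \<le> lv m x" "pq m x y \<le> lv m y" "sq m x y \<le> m - lv m x" "sq m x y \<le> m - lv m y"
proof -
  have f: "finite x" "finite y" using assms vertsD by auto
  show "pq m x y \<le> lv m x" unfolding pq_def lv_def using f by (intro card_mono) auto
  show "pq m x y \<le> lv m y" unfolding pq_def lv_def using f by (intro card_mono) auto
  show "sq m x y \<le> m - lv m x" unfolding sq_def using card_rest[OF assms(1)] f by (metis card_mono finite_Diff Diff_mono inf_le1 order_refl)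
  show "sq m x y \<le> m - lv m y" unfolding sq_def using card_rest[OF assms(2)] f by (metis card_mono finite_Diff Diff_mono inf_le2 order_refl)
qed

lemma fin_sub_eq: "finite C \<Longrightarrow> A \<subseteq> C \<Longrightarrow> card C \<le> card A \<Longrightarrow> A = C"
  using card_seteq by blast

lemma wit:
  assumes xv: "x \<in> verts m" and yv: "y \<in> verts m" and u: "u \<in> y" "u \<notin> x" and v: "v \<in> x" "v \<notin> y"
  defines "w \<equiv> insert v (y - {u})" and "z \<equiv> ground m - insert v y"
  shows "w \<in> verts m" "z \<in> verts m" "adj m w z" "adj m z y"
    "lv m w + (if u \<in> base m then 1 else 0) = lv m y + (if v \<in> base m then 1 else 0)"
    "card (x \<inter> w) = card (x \<inter> y) + 1"
    "card (base m \<inter> x \<inter> w) = card (base m \<inter> x \<inter> y) + (if v \<in> base m then 1 else 0)"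
    "lv m z + lv m y + (if v \<in> base m then 1 else 0) = m"
proof -
  have ys: "y \<subseteq> ground m" "card y = m" "finite y" using vertsD[OF yv] by auto
  have xs: "x \<subseteq> ground m" "finite x" using vertsD[OF xv] by auto
  have vG: "v \<in> ground m" using v xs by blast
  have "card (y - {u}) = m - 1" using u ys by (simp add: card_Diff_singleton)
  then have "card w = m" unfolding w_def using v u ys
    by (metis Diff_iff card_insert_disjoint finite_Diff card_Diff1_less card_0_eq empty_iff
        One_nat_def Suc_pred' bot_nat_0.not_eq_extremum)
  moreover have "w \<subseteq> ground m" unfolding w_def using vG ys by blast
  ultimately show wv: "w \<in> verts m" by (simp add: verts_def)
  have "card (insert v y) = m + 1" using v ys by simp
  moreover have "insert v y \<subseteq> ground m" using vG ys by blast
  ultimately have "card z = m" unfolding z_def using card_Diff_subset[of "insert v y" "ground m"] ys(3) by simp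
  then show zv: "z \<in> verts m" unfolding z_def verts_def by auto
  show "adj m w z" using wv zv unfolding adj_def w_def z_def by blast
  show "adj m z y" using yv zv unfolding adj_def z_def by blast
  have fBy: "finite (base m \<inter> y)" by simp
  show "lv m w + (if u \<in> base m then 1 else 0) = lv m y + (if v \<in> base m then 1 else 0)"
  proof -
    have e1: "base m \<inter> w = (if v \<in> base m then insert v (base m \<inter> y - {u}) else base m \<inter> y - {u})"
      unfolding w_def by auto
    have e2: "card (base m \<inter> y - {u}) + (if u \<in> base m then 1 else 0) = card (base m \<inter> y)"
    proof (cases "u \<in> base m")
      case True
      then have "u \<in> base m \<inter> y" using u by blast
      then have "card (base m \<inter> y) > 0" using fBy card_gt_0_iff by blast
      then show ?thesis using True u by (simp add: card_Diff_singleton)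
    qed (simp)
    show ?thesis unfolding lv_def using e1 e2 v by auto
  qed
  have "x \<inter> w = insert v (x \<inter> y)" unfolding w_def using u v by auto
  then show "card (x \<inter> w) = card (x \<inter> y) + 1" using v xs by simp
  have "base m \<inter> x \<inter> w = (if v \<in> base m then insert v (base m \<inter> x \<inter> y) else base m \<inter> x \<inter> y)"
    unfolding w_def using u v by auto
  then show "card (base m \<inter> x \<inter> w) = card (base m \<inter> x \<inter> y) + (if v \<in> base m then 1 else 0)"
    using v by auto
  have e3: "base m \<inter> z = base m - (base m \<inter> insert v y)" unfolding z_def using base_sub by blast
  have e4: "card (base m \<inter> insert v y) = lv m y + (if v \<in> base m then 1 else 0)"
    unfolding lv_def using v by (auto simp: Int_insert_right)
  have "card (base m - (base m \<inter> insert v y)) = m - card (base m \<inter> insert v y)"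
    by (simp add: card_Diff_subset)
  moreover have "card (base m \<inter> insert v y) \<le> m" using card_mono[OF fin_base, of "base m \<inter> insert v y"] by simp
  ultimately show "lv m z + lv m y + (if v \<in> base m then 1 else 0) = m"
    unfolding lv_def[of m z] using e3 e4 by simp
qed

lemma bnd:
  assumes "w \<in> verts m" "y \<in> verts m" "z \<in> verts m" "adj m w z" "adj m z y"
  shows "card (base m \<inter> (w \<union> y)) + lv m z \<le> m" "card ((w \<union> y) - base m) \<le> lv m z + 1"
proof -
  have d: "z \<inter> w = {}" "z \<inter> y = {}" using assms adj_def by auto
  have f: "finite w" "finite y" "finite z" using assms vertsD by auto
  have "card (base m \<inter> (w \<union> y)) + card (base m \<inter> z) = card ((base m \<inter> (w \<union> y)) \<union> (base m \<inter> z))"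
    using d f by (intro card_Un_disjoint[symmetric]) auto
  also have "\<dots> \<le> m" using card_mono[OF fin_base, of "(base m \<inter> (w \<union> y)) \<union> (base m \<inter> z)"] by auto
  finally show "card (base m \<inter> (w \<union> y)) + lv m z \<le> m" unfolding lv_def .
  have "card ((w \<union> y) - base m) + card (z - base m) = card (((w \<union> y) - base m) \<union> (z - base m))"
    using d f by (intro card_Un_disjoint[symmetric]) auto
  also have "\<dots> \<le> card (ground m - base m)" using assms vertsD by (intro card_mono) auto
  finally have "card ((w \<union> y) - base m) + (m - lv m z) \<le> m + 1" using card_rest[OF assms(3)] card_C by simp
  then show "card ((w \<union> y) - base m) \<le> lv m z + 1" using lv_le[OF assms(3)] by linarith
qed

lemma card_Un_le_split:
  assumes "w \<in> verts m" "y \<in> verts m"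
  shows "card (w \<union> y) = card (base m \<inter> (w \<union> y)) + card ((w \<union> y) - base m)"
proof -
  have "finite (w \<union> y)" using assms vertsD by blast
  then have "card (w \<union> y) = card ((w \<union> y) \<inter> base m) + card ((w \<union> y) - base m)" by (rule card_Int_Diff)
  then show ?thesis by (simp add: Int_commute)
qed

lemma card_diff_via_Un:
  assumes "w \<in> verts m" "y \<in> verts m"
  shows "card (w \<union> y) = card (w - y) + m"
proof -
  have f: "finite w" "finite y" "card y = m" using assms vertsD by auto
  have "card ((w - y) \<union> y) = card (w - y) + card y" by (rule card_Un_disjoint) (use f in auto)
  moreover have "(w - y) \<union> y = w \<union> y" by blast
  ultimately show ?thesis using f by simp
qed

lemma sc_bound:
  assumes xv: "x \<in> verts m" and wv: "w \<in> verts m" and yv: "y \<in> verts m" and zv: "z \<in> verts m"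
    and a: "adj m w z" "adj m z y" and l: "lv m w = lv m y" "lv m z + lv m y = m"
  shows "pq m x y = pq m x w" "card (x \<inter> w) \<le> card (x \<inter> y) + 1"
proof -
  note b = bnd[OF wv yv zv a]
  have f: "finite w" "finite y" "finite x" using vertsD assms by auto
  have "base m \<inter> y = base m \<inter> (w \<union> y)"
    by (rule fin_sub_eq) (use b l f in \<open>auto simp: lv_def\<close>)
  moreover have "base m \<inter> w = base m \<inter> (w \<union> y)"
    by (rule fin_sub_eq) (use b l f in \<open>auto simp: lv_def\<close>)
  ultimately have "base m \<inter> w = base m \<inter> y" by simp
  then have "base m \<inter> x \<inter> y = base m \<inter> x \<inter> w" by blast
  then show "pq m x y = pq m x w" unfolding pq_def by simp
  have "card (w \<union> y) \<le> m + 1" using card_Un_le_split[OF wv yv] b l by linarith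
  then have c1: "card (w - y) \<le> 1" using card_diff_via_Un[OF wv yv] by linarith
  have "x \<inter> w \<subseteq> (x \<inter> y) \<union> (w - y)" by blast
  then have "card (x \<inter> w) \<le> card ((x \<inter> y) \<union> (w - y))" using f by (intro card_mono) auto
  also have "\<dots> \<le> card (x \<inter> y) + card (w - y)" by (rule card_Un_le)
  finally show "card (x \<inter> w) \<le> card (x \<inter> y) + 1" using c1 by linarith
qed

lemma sb_bound:
  assumes xv: "x \<in> verts m" and wv: "w \<in> verts m" and yv: "y \<in> verts m" and zv: "z \<in> verts m"
    and a: "adj m w z" "adj m z y" and l: "lv m w = lv m y" "lv m z + lv m y + 1 = m"
  shows "sq m x y = sq m x w" "pq m x w \<le> pq m x y + 1"
proof -
  note b = bnd[OF wv yv zv a]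
  have f: "finite w" "finite y" "finite x" using vertsD assms by auto
  have cy: "card (y - base m) = m - lv m y" "card (w - base m) = m - lv m w"
    using card_rest yv wv by auto
  have ly: "lv m y \<le> m" using lv_le yv by blast
  have "y - base m = (w \<union> y) - base m"
    by (rule fin_sub_eq) (use b l f cy ly in auto)
  moreover have "w - base m = (w \<union> y) - base m"
    by (rule fin_sub_eq) (use b l f cy ly in auto)
  ultimately have "w - base m = y - base m" by simp
  then have "(x \<inter> y) - base m = (x \<inter> w) - base m" by blast
  then show "sq m x y = sq m x w" unfolding sq_def by simp
  have "base m \<inter> (w \<union> y) = (base m \<inter> y) \<union> (base m \<inter> w - y)" by blast
  moreover have "card ((base m \<inter> y) \<union> (base m \<inter> w - y)) = card (base m \<inter> y) + card (base m \<inter> w - y)"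
    by (rule card_Un_disjoint) auto
  ultimately have "card (base m \<inter> (w \<union> y)) = card (base m \<inter> y) + card (base m \<inter> w - y)" by simp
  then have c1: "card (base m \<inter> w - y) \<le> 1" using b l unfolding lv_def by linarith
  have "base m \<inter> x \<inter> w \<subseteq> (base m \<inter> x \<inter> y) \<union> (base m \<inter> w - y)" by blast
  then have "card (base m \<inter> x \<inter> w) \<le> card ((base m \<inter> x \<inter> y) \<union> (base m \<inter> w - y))" by (intro card_mono) auto
  also have "\<dots> \<le> card (base m \<inter> x \<inter> y) + card (base m \<inter> w - y)" by (rule card_Un_le)
  finally show "pq m x w \<le> pq m x y + 1" using c1 unfolding pq_def by linarith
qed

lemma ct_bound:
  assumes wv: "w \<in> verts m" and yv: "y \<in> verts m" and zv: "z \<in> verts m"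
    and a: "adj m w z" "adj m z y" and l: "lv m y = lv m w + 1" "lv m z + lv m y = m"
  shows "base m \<inter> w \<subseteq> y" "y - base m \<subseteq> w"
proof -
  note b = bnd[OF wv yv zv a]
  have f: "finite w" "finite y" using vertsD assms by auto
  have cw: "card (w - base m) = m - lv m w" using card_rest wv by auto
  have "base m \<inter> y = base m \<inter> (w \<union> y)"
    by (rule fin_sub_eq) (use b l f in \<open>auto simp: lv_def\<close>)
  then show "base m \<inter> w \<subseteq> y" by blast
  have "w - base m = (w \<union> y) - base m"
    by (rule fin_sub_eq) (use b l f cw in auto)
  then show "y - base m \<subseteq> w" by blast
qed


lemma Lp_Mq: "i \<le> m \<Longrightarrow> Mq m (i,i,m,i) = Lp m i"
proof (intro ext)
  fix x y assume i: "i \<le> m"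
  show "Mq m (i,i,m,i) x y = Lp m i x y"
  proof (cases "x \<in> verts m \<and> y \<in> verts m")
    case True
    have f: "finite x" "finite y" "card x = m" "card y = m" using True vertsD by auto
    have "tdist (base m) x y = (i,i,m,i) \<longleftrightarrow> x = y \<and> lv m x = i"
    proof
      assume h: "tdist (base m) x y = (i,i,m,i)"
      then have c: "card (x \<inter> y) = m" "lv m x = i" unfolding tdist_def lv_def by auto
      have "x \<inter> y = x" by (rule fin_sub_eq) (use f c in auto)
      moreover have "x \<inter> y = y" by (rule fin_sub_eq) (use f c in auto)
      ultimately show "x = y \<and> lv m x = i" using c by auto
    next
      assume "x = y \<and> lv m x = i"
      then show "tdist (base m) x y = (i,i,m,i)" using f unfolding tdist_def lv_def by auto
    qed
    then show ?thesis using True unfolding Mq_def Lp_def by auto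
  next
    case False
    then show ?thesis unfolding Mq_def Lp_def by auto
  qed
qed

lemma contain:
  assumes ij: "i \<le> j" and jm: "j \<le> m"
  shows "Mq m (i, j, i + (m - j), i) \<in> terw m"
  using ij jm
proof (induction j rule: dec_induct)
  case base
  then show ?case using Lp_Mq[of i m] Lp_terw[of i m] by simp
next
  case (step n)
  let ?q' = "(i, n, i + (m - n), i)" and ?q = "(i, Suc n, i + (m - Suc n), i)"
  let ?W = "W m n (m - Suc n) (Suc n)"
  let ?N = "mmul m (Mq m ?q') ?W"
  have IH: "Mq m ?q' \<in> terw m" using step by simp
  have NT: "?N \<in> terw m" using terw.mul[OF IH W_terw] step by simp
  show ?case
  proof (rule tri[OF NT])
    fix x y assume xv: "x \<in> verts m" and yv: "y \<in> verts m" and t: "tdist (base m) x y = ?q"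
    have fx: "finite x" "finite y" using xv yv vertsD by auto
    have t': "lv m x = i" "lv m y = Suc n" "pq m x y = i" "sq m x y = m - Suc n"
      using t tdist_eq[OF xv yv] by auto
    have "base m \<inter> x \<inter> y = base m \<inter> x"
      by (rule fin_sub_eq) (use t' fx in \<open>auto simp: pq_def lv_def\<close>)
    obtain u where u: "u \<in> base m" "u \<in> y" "u \<notin> x"
    proof -
      have "\<not> base m \<inter> y \<subseteq> x"
      proof
        assume "base m \<inter> y \<subseteq> x"
        then have "base m \<inter> y \<subseteq> base m \<inter> x \<inter> y" by blast
        then have "card (base m \<inter> y) \<le> card (base m \<inter> x \<inter> y)" by (intro card_mono) auto
        then show False using t' unfolding pq_def lv_def using step by simp
      qed
      then show ?thesis using that by blast
    qed
    obtain v where v: "v \<notin> base m" "v \<in> x" "v \<notin> y"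
    proof -
      have "\<not> x - base m \<subseteq> y"
      proof
        assume "x - base m \<subseteq> y"
        then have "x - base m \<subseteq> (x \<inter> y) - base m" by blast
        then have "card (x - base m) \<le> card ((x \<inter> y) - base m)" using fx by (intro card_mono) auto
        then show False using t' card_rest[OF xv] step unfolding sq_def by simp
      qed
      then show ?thesis using that by blast
    qed
    note wt = wit[OF xv yv u(2,3) v(2,3)]
    define w where "w = insert v (y - {u})"
    define z where "z = ground m - insert v y"
    have wv: "w \<in> verts m" and zv: "z \<in> verts m" and a: "adj m w z" "adj m z y"
      using wt unfolding w_def z_def by auto
    have lw: "lv m w = n" using wt(5) u v t' unfolding w_def by simp
    have lz: "lv m z = m - Suc n" using wt(8) v t' unfolding z_def by simp
    have "card (x \<inter> y) = i + (m - Suc n)" using t unfolding tdist_def by simp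
    then have "card (x \<inter> w) = i + (m - n)" using wt(6) step unfolding w_def by simp
    moreover have "card (base m \<inter> x \<inter> w) = i" using wt(7) v t' unfolding w_def pq_def by simp
    ultimately have "tdist (base m) x w = ?q'" using lw t' unfolding tdist_def lv_def by simp
    then have "0 < Mq m ?q' x w" using xv wv unfolding Mq_def by simp
    moreover have "0 < ?W w y" by (rule W_pos[OF zv wv yv lw lz t'(2) a])
    ultimately have "0 < ?N x y" by (intro mmul_pos[OF nn_Mq nn_W wv])
    then show "?N x y \<noteq> 0" by auto
  next
    fix x y assume xv: "x \<in> verts m" and yv: "y \<in> verts m" and N: "?N x y \<noteq> 0"
      and ne: "tdist (base m) x y \<noteq> ?q"
    obtain w where wv: "w \<in> verts m" and M: "Mq m ?q' x w \<noteq> 0" and Ww: "?W w y \<noteq> 0"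
      using mmul_supp[OF N] by blast
    have tw: "tdist (base m) x w = ?q'" using M unfolding Mq_def by (auto split: if_splits)
    then have tw': "lv m x = i" "lv m w = n" "pq m x w = i" "sq m x w = m - n"
      using tdist_eq[OF xv wv] by auto
    obtain z where zv: "z \<in> verts m" and l: "lv m w = n" "lv m z = m - Suc n" "lv m y = Suc n"
      and a: "adj m w z" "adj m z y"
      using W_supp[OF Ww] by blast
    have ct: "base m \<inter> w \<subseteq> y" "y - base m \<subseteq> w"
      by (rule ct_bound[OF wv yv zv a]; use l step in simp)+
    have fx: "finite x" "finite y" "finite w" using xv yv wv vertsD by auto
    have "base m \<inter> x \<inter> w = base m \<inter> x"
      by (rule fin_sub_eq) (use tw' fx in \<open>auto simp: pq_def lv_def\<close>)
    then have "base m \<inter> x \<inter> y = base m \<inter> x" using ct by blast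
    then have p: "pq m x y = i" using tw' unfolding pq_def lv_def by simp
    have "(x \<inter> w) - base m = w - base m"
      by (rule fin_sub_eq) (use tw' fx card_rest[OF wv] in \<open>auto simp: sq_def\<close>)
    then have "(x \<inter> y) - base m = y - base m" using ct by blast
    then have s: "sq m x y = m - Suc n" using card_rest[OF yv] l unfolding sq_def by simp
    have "tdist (base m) x y = ?q" using tdist_eq[OF xv yv] p s tw' l by simp
    then show "Mq m (tdist (base m) x y) \<in> terw m" using ne by simp
  qed
qed

definition mu :: "nat \<Rightarrow> nat \<times> nat \<times> nat \<times> nat \<Rightarrow> nat" where
  "mu m q = (case q of (i,j,t,p) \<Rightarrow> (min i j - p) + (min (m-i) (m-j) - (t - p)))"

lemma mu_eq: "mu m (i, j, p + s, p) = (min i j - p) + (min (m-i) (m-j) - s)"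
  by (simp add: mu_def)

lemma exists_out:
  assumes "finite A" "finite C" "C \<subseteq> A" "card C < card A"
  shows "\<exists>a\<in>A. a \<notin> C"
  using assms by (metis card_mono not_le subsetI)

lemma step_case:
  assumes IH: "\<And>q'. mu m q' < mu m q \<Longrightarrow> Mq m q' \<in> terw m"
    and q: "q = (i,j,t,p)"
    and real: "x0 \<in> verts m" "y0 \<in> verts m" "tdist (base m) x0 y0 = q"
  shows "Mq m q \<in> terw m"
proof -
  have r: "i = lv m x0" "j = lv m y0" "p = pq m x0 y0" "t = pq m x0 y0 + sq m x0 y0"
    using real tdist_eq[OF real(1,2)] q by auto
  define s where "s = sq m x0 y0"
  note pb = pair_bounds[OF real(1,2)]
  have bnds: "p \<le> i" "p \<le> j" "s \<le> m - i" "s \<le> m - j" "i \<le> m" "j \<le> m" "t = p + s"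
    using pb r lv_le real unfolding s_def by auto
  have Tq: "x \<in> verts m \<Longrightarrow> y \<in> verts m \<Longrightarrow> tdist (base m) x y = q \<Longrightarrow>
      lv m x = i \<and> lv m y = j \<and> pq m x y = p \<and> sq m x y = s \<and> card (x \<inter> y) = t" for x y
    using tdist_eq[of x m y] bnds q unfolding tdist_def by auto
  consider (A) "s < m - i" "s < m - j" | (B) "\<not> (s < m - i \<and> s < m - j)" "p < i" "p < j"
    | (C) "\<not> (s < m - i \<and> s < m - j)" "\<not> (p < i \<and> p < j)" by blast
  then show ?thesis
  proof cases
    case A
    let ?q' = "(i, j, t+1, p)"
    let ?W = "W m j (m - j) j"
    let ?N = "mmul m (Mq m ?q') ?W"
    have "mu m ?q' < mu m q"
    proof -
      have "s < min (m-i) (m-j)" using A by simp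
      moreover have "mu m ?q' = (min i j - p) + (min (m-i) (m-j) - (s+1))"
        using mu_eq[of m i j p "s+1"] bnds by simp
      moreover have "mu m q = (min i j - p) + (min (m-i) (m-j) - s)" using mu_eq[of m i j p s] bnds q by simp
      ultimately show ?thesis by linarith
    qed
    then have IH': "Mq m ?q' \<in> terw m" using IH by blast
    have NT: "?N \<in> terw m" using terw.mul[OF IH' W_terw] bnds by simp
    show ?thesis
    proof (rule tri[OF NT])
      fix x y assume xv: "x \<in> verts m" and yv: "y \<in> verts m" and t: "tdist (base m) x y = q"
      have fx: "finite x" "finite y" using xv yv vertsD by auto
      note T = Tq[OF xv yv t]
      obtain u where u: "u \<in> y - base m" "u \<notin> (x \<inter> y) - base m"
        using exists_out[of "y - base m" "(x \<inter> y) - base m"] fx T card_rest[OF yv] A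
        unfolding sq_def by auto
      obtain v where v: "v \<in> x - base m" "v \<notin> (x \<inter> y) - base m"
        using exists_out[of "x - base m" "(x \<inter> y) - base m"] fx T card_rest[OF xv] A
        unfolding sq_def by auto
      have uu: "u \<in> y" "u \<notin> x" "u \<notin> base m" and vv: "v \<in> x" "v \<notin> y" "v \<notin> base m" using u v by auto
      note wt = wit[OF xv yv uu(1,2) vv(1,2)]
      define w where "w = insert v (y - {u})"
      define z where "z = ground m - insert v y"
      have wv: "w \<in> verts m" and zv: "z \<in> verts m" and a: "adj m w z" "adj m z y"
        using wt unfolding w_def z_def by auto
      have lw: "lv m w = j" using wt(5) uu vv T unfolding w_def by simp
      have lz: "lv m z = m - j" using wt(8) vv T unfolding z_def by simp
      have "card (x \<inter> w) = t + 1" using wt(6) T unfolding w_def by simp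
      moreover have "card (base m \<inter> x \<inter> w) = p" using wt(7) vv T unfolding w_def pq_def by simp
      ultimately have "tdist (base m) x w = ?q'" using lw T unfolding tdist_def lv_def by simp
      then have "0 < Mq m ?q' x w" using xv wv unfolding Mq_def by simp
      moreover have "0 < ?W w y" by (rule W_pos[OF zv wv yv lw lz]) (use T a in auto)
      ultimately have "0 < ?N x y" by (intro mmul_pos[OF nn_Mq nn_W wv])
      then show "?N x y \<noteq> 0" by auto
    next
      fix x y assume xv: "x \<in> verts m" and yv: "y \<in> verts m" and N: "?N x y \<noteq> 0"
        and ne: "tdist (base m) x y \<noteq> q"
      obtain w where wv: "w \<in> verts m" and M: "Mq m ?q' x w \<noteq> 0" and Ww: "?W w y \<noteq> 0"
        using mmul_supp[OF N] by blast
      have tw: "tdist (base m) x w = ?q'" using M unfolding Mq_def by (auto split: if_splits)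
      then have tw': "lv m x = i" "lv m w = j" "pq m x w = p" "card (x \<inter> w) = t + 1"
        using tdist_eq[OF xv wv] unfolding tdist_def pq_def lv_def by auto
      obtain z where zv: "z \<in> verts m" and l: "lv m w = j" "lv m z = m - j" "lv m y = j"
        and a: "adj m w z" "adj m z y"
        using W_supp[OF Ww] by blast
      have lzy: "lv m z + lv m y = m" using l bnds by simp
      note sc = sc_bound[OF xv wv yv zv a, OF _ lzy]
      have p2: "pq m x y = p" using sc(1) tw' l by simp
      have c2: "t \<le> card (x \<inter> y)" using sc(2) tw' l by simp
      have e: "tdist (base m) x y = (i, j, pq m x y + sq m x y, pq m x y)"
        using tdist_eq[OF xv yv] tw' l by simp
      have "card (x \<inter> y) = pq m x y + sq m x y" using e unfolding tdist_def by simp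
      then have "sq m x y > s" using e ne p2 c2 bnds q by auto
      moreover have "sq m x y \<le> m - i" "sq m x y \<le> m - j" using pair_bounds[OF xv yv] tw' l by auto
      ultimately have "mu m (tdist (base m) x y) < mu m q"
      proof -
        assume a1: "s < sq m x y" and a2: "sq m x y \<le> m - i" "sq m x y \<le> m - j"
        have "sq m x y \<le> min (m-i) (m-j)" using a2 by simp
        moreover have "mu m (tdist (base m) x y) = (min i j - p) + (min (m-i) (m-j) - sq m x y)"
          using e p2 mu_eq by simp
        moreover have "mu m q = (min i j - p) + (min (m-i) (m-j) - s)" using mu_eq[of m i j p s] bnds q by simp
        ultimately show ?thesis using a1 by linarith
      qed
      then show "Mq m (tdist (base m) x y) \<in> terw m" using IH by blast
    qed
  next
    case B
    have jm: "j < m"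
    proof (rule ccontr)
      assume "\<not> j < m"
      then have "card (base m) \<le> card (base m \<inter> y0)" using r bnds unfolding lv_def by simp
      then have "base m \<inter> y0 = base m" using fin_sub_eq[of "base m" "base m \<inter> y0"] by auto
      then have "base m \<inter> x0 \<inter> y0 = base m \<inter> x0" by blast
      then show False using r B unfolding pq_def lv_def by simp
    qed
    let ?q' = "(i, j, t+1, p+1)"
    let ?W = "W m j (m - j - 1) j"
    let ?N = "mmul m (Mq m ?q') ?W"
    have "mu m ?q' < mu m q"
    proof -
      have "p < min i j" using B by simp
      moreover have "mu m ?q' = (min i j - (p+1)) + (min (m-i) (m-j) - s)"
        using mu_eq[of m i j "p+1" s] bnds by simp
      moreover have "mu m q = (min i j - p) + (min (m-i) (m-j) - s)" using mu_eq[of m i j p s] bnds q by simp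
      ultimately show ?thesis by linarith
    qed
    then have IH': "Mq m ?q' \<in> terw m" using IH by blast
    have NT: "?N \<in> terw m" using terw.mul[OF IH' W_terw] bnds by simp
    show ?thesis
    proof (rule tri[OF NT])
      fix x y assume xv: "x \<in> verts m" and yv: "y \<in> verts m" and t: "tdist (base m) x y = q"
      have fx: "finite x" "finite y" using xv yv vertsD by auto
      note T = Tq[OF xv yv t]
      obtain u where u: "u \<in> base m \<inter> y" "u \<notin> base m \<inter> x \<inter> y"
        using exists_out[of "base m \<inter> y" "base m \<inter> x \<inter> y"] fx T B
        unfolding pq_def lv_def by auto
      obtain v where v: "v \<in> base m \<inter> x" "v \<notin> base m \<inter> x \<inter> y"
        using exists_out[of "base m \<inter> x" "base m \<inter> x \<inter> y"] fx T B
        unfolding pq_def lv_def by auto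
      have uu: "u \<in> y" "u \<notin> x" "u \<in> base m" and vv: "v \<in> x" "v \<notin> y" "v \<in> base m" using u v by auto
      note wt = wit[OF xv yv uu(1,2) vv(1,2)]
      define w where "w = insert v (y - {u})"
      define z where "z = ground m - insert v y"
      have wv: "w \<in> verts m" and zv: "z \<in> verts m" and a: "adj m w z" "adj m z y"
        using wt unfolding w_def z_def by auto
      have lw: "lv m w = j" using wt(5) uu vv T unfolding w_def by simp
      have lz: "lv m z = m - j - 1" using wt(8) vv T unfolding z_def by simp
      have "card (x \<inter> w) = t + 1" using wt(6) T unfolding w_def by simp
      moreover have "card (base m \<inter> x \<inter> w) = p + 1" using wt(7) vv T unfolding w_def pq_def by simp
      ultimately have "tdist (base m) x w = ?q'" using lw T unfolding tdist_def lv_def by simp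
      then have "0 < Mq m ?q' x w" using xv wv unfolding Mq_def by simp
      moreover have "0 < ?W w y" by (rule W_pos[OF zv wv yv lw lz]) (use T a in auto)
      ultimately have "0 < ?N x y" by (intro mmul_pos[OF nn_Mq nn_W wv])
      then show "?N x y \<noteq> 0" by auto
    next
      fix x y assume xv: "x \<in> verts m" and yv: "y \<in> verts m" and N: "?N x y \<noteq> 0"
        and ne: "tdist (base m) x y \<noteq> q"
      obtain w where wv: "w \<in> verts m" and M: "Mq m ?q' x w \<noteq> 0" and Ww: "?W w y \<noteq> 0"
        using mmul_supp[OF N] by blast
      have tw: "tdist (base m) x w = ?q'" using M unfolding Mq_def by (auto split: if_splits)
      then have tw': "lv m x = i" "lv m w = j" "pq m x w = p + 1" "pq m x w + sq m x w = t + 1"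
        using tdist_eq[OF xv wv] by auto
      obtain z where zv: "z \<in> verts m" and l: "lv m w = j" "lv m z = m - j - 1" "lv m y = j"
        and a: "adj m w z" "adj m z y"
        using W_supp[OF Ww] by blast
      have lzy: "lv m z + lv m y + 1 = m" using l jm by simp
      note sb = sb_bound[OF xv wv yv zv a, OF _ lzy]
      have s2: "sq m x y = s" using sb(1) tw' l bnds by simp
      have p2: "p \<le> pq m x y" using sb(2) tw' l by simp
      have e: "tdist (base m) x y = (i, j, pq m x y + sq m x y, pq m x y)"
        using tdist_eq[OF xv yv] tw' l by simp
      then have "pq m x y > p" using ne p2 s2 bnds q by auto
      moreover have "pq m x y \<le> i" "pq m x y \<le> j" using pair_bounds[OF xv yv] tw' l by auto
      ultimately have "mu m (tdist (base m) x y) < mu m q"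
      proof -
        assume a1: "p < pq m x y" and a2: "pq m x y \<le> i" "pq m x y \<le> j"
        have "pq m x y \<le> min i j" using a2 by simp
        moreover have "mu m (tdist (base m) x y) = (min i j - pq m x y) + (min (m-i) (m-j) - s)"
          using e s2 mu_eq by simp
        moreover have "mu m q = (min i j - p) + (min (m-i) (m-j) - s)" using mu_eq[of m i j p s] bnds q by simp
        ultimately show ?thesis using a1 by linarith
      qed
      then show "Mq m (tdist (base m) x y) \<in> terw m" using IH by blast
    qed
  next
    case C
    show ?thesis
    proof (cases "i \<le> j")
      case True
      then have "q = (i, j, i + (m - j), i)" using C bnds q by auto
      then show ?thesis using contain[OF True bnds(6)] by simp
    next
      case False
      then have "q = (i, j, j + (m - i), j)" using C bnds q by auto
      moreover have "Mq m (i, j, j + (m - i), j) = tr (Mq m (j, i, j + (m - i), j))"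
        using Mq_tr[of m i j "j + (m - i)" j] by simp
      ultimately show ?thesis using terw_tr[OF contain[of j i m]] False bnds by simp
    qed
  qed
qed

lemma all_Mq: "Mq m q \<in> terw m"
proof -
  have "\<forall>q. mu m q = n \<longrightarrow> Mq m q \<in> terw m" for n
  proof (induction n rule: less_induct)
    case (less n)
    show ?case
    proof (intro allI impI)
      fix q assume mq: "mu m q = n"
      obtain i j t p where q: "q = (i,j,t,p)" by (cases q) auto
      have IH: "\<And>q'. mu m q' < mu m q \<Longrightarrow> Mq m q' \<in> terw m" using less mq by blast
      show "Mq m q \<in> terw m"
      proof (cases "\<exists>x y. x \<in> verts m \<and> y \<in> verts m \<and> tdist (base m) x y = q")
        case False
        then have "Mq m q = (\<lambda>x y. 0)" unfolding Mq_def by (intro ext) auto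
        then show ?thesis using terw_zero by simp
      next
        case True
        then obtain x0 y0 where "x0 \<in> verts m" "y0 \<in> verts m" "tdist (base m) x0 y0 = q" by blast
        then show ?thesis using step_case[OF IH q] by blast
      qed
    qed
  qed
  then show ?thesis by blast
qed

theorem theorem3p8:
  fixes m :: nat
  assumes "0 < m"
  shows "Aspan m = terw m \<and> Mq_indep m \<and> terw m = centralizer m"
  using main_reduction all_Mq by blast

end
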